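(* The number of integers $N$ with $2^{i-1}\le N<2^i$ for which there exist antipalindromic numbers $A,B$ with $N=A/B$ is $\Omega(\sqrt{2}^{\,i})$ as $i\to\infty$.
   Context: A positive integer $n$ is antipalindromic if its binary representation $w=w_1\cdots w_L$ (most significant digit first, no leading zeros) has even length $L$ and satisfies $w_i+w_{L+1-i}=1$ for all $i$ (the second half is the reverse complement of the first half). *)

theory Defs
  imports Complex_Main "HOL-Library.Landau_Symbols"
begin

definition bdigit :: "nat \<Rightarrow> nat \<Rightarrow> nat" where
  "bdigit n k = (n div 2 ^ k) mod 2"

text \<open>n is antipalindromic: its binary representation (no leading zeros) has even
  length L (i.e. 2^(L-1) \<le> n < 2^L) and w_i + w_(L+1-i) = 1 for all i; with positions
  counted from the least significant digit this is digit k + digit (L-1-k) = 1.\<close>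
definition antipalindromic :: "nat \<Rightarrow> bool" where
  "antipalindromic n \<longleftrightarrow> 0 < n \<and> (\<exists>L. even L \<and> 2 ^ (L - 1) \<le> n \<and> n < 2 ^ L \<and>
      (\<forall>k<L. bdigit n k + bdigit n (L - 1 - k) = 1))"

end

theory Submission
  imports Defs
begin


lemma bdigit_sum:
  assumes "\<And>k. w k \<le> (1::nat)"
  shows "(\<Sum>k<n. w k * 2^k) < 2^n \<and> (\<forall>j. bdigit (\<Sum>k<n. w k * 2^k) j = (if j < n then w j else 0))"
proof (induction n)
  case 0
  then show ?case by (simp add: bdigit_def)
next
  case (Suc n)
  let ?S = "\<Sum>k<n. w k * 2^k"
  have lt: "?S < 2^n" using Suc by blast
  have wn: "w n \<le> 1" using assms by blast
  have b1: "(\<Sum>k<Suc n. w k * 2^k) < 2^Suc n"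
  proof -
    have "(\<Sum>k<Suc n. w k * 2^k) = ?S + w n * 2^n" by simp
    also have "\<dots> < 2^n + 1 * 2^n" using lt wn by (meson add_less_le_mono mult_le_mono1)
    finally show ?thesis by simp
  qed
  have b2: "bdigit (\<Sum>k<Suc n. w k * 2^k) j = (if j < Suc n then w j else 0)" for j
  proof -
    have eq: "(\<Sum>k<Suc n. w k * 2^k) = ?S + w n * 2^n" by simp
    consider "j < n" | "j = n" | "j > n" by linarith
    then show ?thesis
    proof cases
      case 1
      have "(2::nat)^n = 2^j * 2^(n-j)" using 1 by (simp add: power_add[symmetric])
      then have e1: "?S + w n * 2^n = ?S + (w n * 2^(n-j)) * 2^j" by simp
      have e2: "(?S + (w n * 2^(n-j)) * 2^j) div 2^j = ?S div 2^j + w n * 2^(n-j)"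
        using div_mult_self1[of "(2::nat)^j" ?S "w n * 2^(n-j)"] by (simp add: add.commute)
      have ediv: "(?S + w n * 2^n) div 2^j = ?S div 2^j + w n * 2^(n-j)" by (subst e1) (rule e2)
      moreover have "even (w n * 2^(n-j))" using 1 by simp
      then obtain c where c: "w n * 2^(n-j) = 2*c" by (rule evenE)
      have "(?S + w n * 2^n) div 2^j mod 2 = ?S div 2^j mod 2" unfolding ediv c by simp
      then show ?thesis using Suc 1 eq unfolding bdigit_def by auto
    next
      case 2
      have "(?S + w n * 2^n) div 2^n = w n" using lt by simp
      then show ?thesis using 2 wn eq unfolding bdigit_def by auto
    next
      case 3
      have "(2::nat)^Suc n \<le> 2^j" using 3 by (intro power_increasing) auto
      then have "(\<Sum>k<Suc n. w k * 2^k) div 2^j = 0" using b1 by (intro div_less) linarith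
      then show ?thesis using 3 unfolding bdigit_def by auto
    qed
  qed
  show ?case using b1 b2 by blast
qed

lemma bits_eq:
  "Z < 2^m \<Longrightarrow> Z' < 2^m \<Longrightarrow> (\<forall>j<m. bdigit Z j = bdigit Z' j) \<Longrightarrow> Z = (Z'::nat)"
proof (induction m arbitrary: Z Z')
  case 0 then show ?case by simp
next
  case (Suc m)
  have "Z div 2 = Z' div 2"
  proof (rule Suc.IH)
    show "Z div 2 < 2^m" "Z' div 2 < 2^m" using Suc.prems by auto
    show "\<forall>j<m. bdigit (Z div 2) j = bdigit (Z' div 2) j"
    proof (intro allI impI)
      fix j assume "j < m"
      then have "bdigit Z (Suc j) = bdigit Z' (Suc j)" using Suc.prems by auto
      then show "bdigit (Z div 2) j = bdigit (Z' div 2) j"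
        unfolding bdigit_def by (simp add: div_mult2_eq)
    qed
  qed
  moreover have "Z mod 2 = Z' mod 2" using Suc.prems(3) unfolding bdigit_def by force
  ultimately show ?case by (metis div_mult_mod_eq)
qed



definition wbit :: "(nat \<Rightarrow> nat) \<Rightarrow> nat \<Rightarrow> nat \<Rightarrow> nat" where
  "wbit f h k = (if k < h then f k else 1 - f (2*h - 1 - k))"

definition Aval :: "(nat \<Rightarrow> nat) \<Rightarrow> nat \<Rightarrow> nat" where
  "Aval f h = (\<Sum>k<2*h. wbit f h k * 2^k)"

lemma wbit_le: "\<forall>k. f k \<le> 1 \<Longrightarrow> wbit f h k \<le> 1"
  unfolding wbit_def by auto

lemma Aval_bits:
  assumes "\<forall>k. f k \<le> 1"
  shows "Aval f h < 2^(2*h)" "bdigit (Aval f h) j = (if j < 2*h then wbit f h j else 0)"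
  using bdigit_sum[of "wbit f h" "2*h"] wbit_le[OF assms] unfolding Aval_def by blast+

lemma Aval_antipal:
  assumes f1: "\<forall>k. f k \<le> 1" and f0: "f 0 = 0" and h: "h > 0"
  shows "antipalindromic (Aval f h)" "2^(2*h-1) \<le> Aval f h" "even (Aval f h)"
proof -
  have w: "wbit f h (2*h-1) = 1" using f0 h unfolding wbit_def by auto
  have "wbit f h (2*h-1) * 2^(2*h-1) \<le> Aval f h"
    unfolding Aval_def by (rule member_le_sum) (use h in auto)
  then show lb: "2^(2*h-1) \<le> Aval f h" using w by simp
  have "Aval f h = (\<Sum>k\<in>{0..<2*h}. wbit f h k * 2^k)" unfolding Aval_def
    by (simp add: atLeast0LessThan)
  also have "\<dots> = wbit f h 0 * 2^0 + (\<Sum>k\<in>{Suc 0..<2*h}. wbit f h k * 2^k)"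
    using h by (subst sum.atLeast_Suc_lessThan) auto
  finally have eqs: "Aval f h = wbit f h 0 + (\<Sum>k\<in>{Suc 0..<2*h}. wbit f h k * 2^k)" by simp
  have "wbit f h 0 = 0" using f0 h unfolding wbit_def by simp
  moreover have "even (\<Sum>k\<in>{Suc 0..<2*h}. wbit f h k * 2^k)"
    by (rule dvd_sum) auto
  ultimately show "even (Aval f h)" using eqs by simp
  have "0 < Aval f h" using lb by (metis not_less not_one_le_zero one_le_numeral one_le_power order_trans)
  moreover have "\<forall>k<2*h. bdigit (Aval f h) k + bdigit (Aval f h) (2*h - 1 - k) = 1"
  proof (intro allI impI)
    fix k assume k: "k < 2*h"
    have "bdigit (Aval f h) k + bdigit (Aval f h) (2*h - 1 - k) = wbit f h k + wbit f h (2*h-1-k)"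
      using Aval_bits(2)[OF f1] k by simp
    also have "\<dots> = 1" using f1 k unfolding wbit_def
      by (cases "k < h") (auto simp: le_Suc_eq dest: spec[of _ k])
    finally show "bdigit (Aval f h) k + bdigit (Aval f h) (2*h - 1 - k) = 1" .
  qed
  ultimately show "antipalindromic (Aval f h)" unfolding antipalindromic_def
    using lb Aval_bits(1)[OF f1] by (intro conjI exI[of _ "2*h"]) auto
qed

lemma Aval_inj:
  assumes "\<forall>k. f k \<le> 1" "\<forall>k. g k \<le> 1" "Aval f h = Aval g h" "k < h"
  shows "f k = g k"
proof -
  have "bdigit (Aval f h) k = bdigit (Aval g h) k" using assms by simp
  then show ?thesis using Aval_bits(2)[OF assms(1), of h k] Aval_bits(2)[OF assms(2), of h k] assms(4)
    unfolding wbit_def by simp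
qed

lemma Aval_upper:
  assumes f1: "\<forall>k. f k \<le> 1" and f0: "f 0 = 0" and "f 1 = 1" "f 2 = 1" and h: "h \<ge> 3"
  shows "Aval f h < 5 * 2^(2*h-3)"
proof -
  obtain m where m: "2*h = Suc (Suc (Suc m))" using h by (metis add_Suc_right add_Suc_shift mult_2 numeral_3_eq_3 le_Suc_ex)
  have "m \<ge> h" using m h by simp
  have w1: "wbit f h (Suc (Suc m)) = 1" "wbit f h (Suc m) = 0" "wbit f h m = 0"
    using m h assms unfolding wbit_def by auto
  have "Aval f h = (\<Sum>k<m. wbit f h k * 2^k) + 2^(Suc (Suc m))"
    unfolding Aval_def m using w1 by simp
  moreover have "(\<Sum>k<m. wbit f h k * 2^k) < 2^m" using bdigit_sum[of "wbit f h" m] wbit_le[OF f1] by blast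
  moreover have "2*h-3 = m" using m by simp
  ultimately show ?thesis by simp
qed

lemma Aval_pair:
  "Aval f h = (\<Sum>k<h. f k * 2^k + (1 - f k) * 2^(2*h-1-k))"
proof -
  have e: "{..<2*h} = {..<h} \<union> {h..<2*h}" by auto
  have "Aval f h = (\<Sum>k\<in>{..<h} \<union> {h..<2*h}. wbit f h k * 2^k)"
    unfolding Aval_def e ..
  also have "\<dots> = (\<Sum>k<h. wbit f h k * 2^k) + (\<Sum>k\<in>{h..<2*h}. wbit f h k * 2^k)"
    by (rule sum.union_disjoint) auto
  finally have "Aval f h = (\<Sum>k<h. wbit f h k * 2^k) + (\<Sum>k\<in>{h..<2*h}. wbit f h k * 2^k)" .
  moreover have "(\<Sum>k<h. wbit f h k * 2^k) = (\<Sum>k<h. f k * 2^k)"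
    by (rule sum.cong) (auto simp: wbit_def)
  moreover have "(\<Sum>k\<in>{h..<2*h}. wbit f h k * 2^k) = (\<Sum>k<h. (1 - f k) * 2^(2*h-1-k))"
    by (rule sum.reindex_bij_witness[of _ "\<lambda>k. 2*h-1-k" "\<lambda>k. 2*h-1-k"]) (auto simp: wbit_def)
  ultimately show ?thesis by (simp add: sum.distrib)
qed



definition Xg :: "nat \<Rightarrow> nat" where
  "Xg g = bdigit g 0 * 8 + bdigit g 1 * 16 + bdigit g 2 * 32 + bdigit g 3 * 64"
definition Yg :: "nat \<Rightarrow> nat" where
  "Yg g = (1 - bdigit g 0) * 8 + (1 - bdigit g 1) * 4 + (1 - bdigit g 2) * 2 + (1 - bdigit g 3)"

lemma gadget_table:
  "\<forall>s\<in>set [0..<5]. \<forall>p\<in>set [2::nat,3]. \<exists>g\<in>set [0..<16]. (s + Xg g + p * Yg g) mod 5 = 0"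
  by code_simp

lemma gadget:
  assumes "P mod 5 = 2 \<or> P mod 5 = 3"
  shows "\<exists>g<16. (r + Xg g + P * Yg g) mod 5 = (0::nat)"
proof -
  have a: "r mod 5 \<in> set [0..<5]" by simp
  have b: "P mod 5 \<in> set [2,3]" using assms by auto
  from bspec[OF bspec[OF gadget_table a] b] obtain g
    where g: "g \<in> set [0..<16]" "(r mod 5 + Xg g + (P mod 5) * Yg g) mod 5 = 0" ..
  have "(r + Xg g + P * Yg g) mod 5 = (r mod 5 + Xg g + (P mod 5) * Yg g) mod 5"
    by (intro mod_add_cong) (simp_all add: mod_mult_left_eq)
  then show ?thesis using g by auto
qed



definition Fe :: "nat \<Rightarrow> nat \<Rightarrow> nat \<Rightarrow> nat" where
  "Fe Z g k = (if k = 0 then 0 else if k < 3 then 1 else if k < 7 then bdigit g (k-3) else bdigit Z (k-7))"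

lemma bdigit_le: "bdigit n k \<le> 1" unfolding bdigit_def by simp

lemma Fe_le: "\<forall>k. Fe Z g k \<le> 1" unfolding Fe_def using bdigit_le by simp

lemma ring_aux: "(a0::nat)*8 + c0*(P*8) + (a1*16 + c1*(P*4)) + (a2*32 + c2*(P*2)) + (a3*64 + c3*P)
   = (a0 * 8 + a1 * 16 + a2 * 32 + a3 * 64) + P * (c0 * 8 + c1 * 4 + c2 * 2 + c3)"
  by (simp add: algebra_simps)

lemma Aval_Fe:
  assumes "h = m + 7"
  shows "\<exists>R. \<forall>g. Aval (Fe Z g) h = R + Xg g + 2^(2*m+7) * Yg g"
proof -
  define T where "T g k = Fe Z g k * 2^k + (1 - Fe Z g k) * 2^(2*h-1-k)" for g k
  have e: "{..<h} = ({..<3} \<union> {3..<7}) \<union> {7..<h}" using assms by auto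
  have split: "Aval (Fe Z g) h = (\<Sum>k<3. T g k) + (\<Sum>k\<in>{3..<7}. T g k) + (\<Sum>k\<in>{7..<h}. T g k)" for g
  proof -
    have "Aval (Fe Z g) h = (\<Sum>k\<in>({..<3} \<union> {3..<7}) \<union> {7..<h}. T g k)"
      unfolding Aval_pair T_def e ..
    also have "\<dots> = (\<Sum>k\<in>{..<3} \<union> {3..<7}. T g k) + (\<Sum>k\<in>{7..<h}. T g k)"
      by (rule sum.union_disjoint) auto
    also have "(\<Sum>k\<in>{..<3} \<union> {3..<7}. T g k) = (\<Sum>k<3. T g k) + (\<Sum>k\<in>{3..<7}. T g k)"
      by (rule sum.union_disjoint) auto
    finally show ?thesis .
  qed
  have c1: "(\<Sum>k<3. T g k) = (\<Sum>k<3. T 0 k)" for g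
    by (rule sum.cong) (auto simp: T_def Fe_def)
  have c2: "(\<Sum>k\<in>{7..<h}. T g k) = (\<Sum>k\<in>{7..<h}. T 0 k)" for g
    by (rule sum.cong) (auto simp: T_def Fe_def)
  have mid: "(\<Sum>k\<in>{3..<7}. T g k) = Xg g + 2^(2*m+7) * Yg g" for g
  proof -
    have s: "{3..<7} = {3,4,5,6::nat}" by auto
    have "(\<Sum>k\<in>{3..<7}. T g k) = T g 3 + T g 4 + T g 5 + T g 6"
      unfolding s by simp
    also have "\<dots> = Xg g + 2^(2*m+7) * Yg g"
    proof -
      obtain P where P: "P = (2::nat)^(2*m+7)" by simp
      have p: "(2::nat)^(2*h-1-3) = P*8" "(2::nat)^(2*h-1-4) = P*4" "(2::nat)^(2*h-1-5) = P*2"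
        "(2::nat)^(2*h-1-6) = P"
        unfolding P assms by (simp_all add: power_add)
      have t: "T g 3 = bdigit g 0 * 8 + (1 - bdigit g 0) * (P*8)"
        "T g 4 = bdigit g 1 * 16 + (1 - bdigit g 1) * (P*4)"
        "T g 5 = bdigit g 2 * 32 + (1 - bdigit g 2) * (P*2)"
        "T g 6 = bdigit g 3 * 64 + (1 - bdigit g 3) * P"
        unfolding T_def p by (simp_all add: Fe_def)
      have "T g 3 + T g 4 + T g 5 + T g 6 = Xg g + P * Yg g"
        unfolding t Xg_def Yg_def by (rule ring_aux)
      then show ?thesis using P by simp
    qed
    finally show ?thesis .
  qed
  show ?thesis
  proof (rule exI[of _ "(\<Sum>k<3. T 0 k) + (\<Sum>k\<in>{7..<h}. T 0 k)"], rule allI)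
    fix g
    show "Aval (Fe Z g) h = (\<Sum>k<3. T 0 k) + (\<Sum>k\<in>{7..<h}. T 0 k) + Xg g + 2 ^ (2 * m + 7) * Yg g"
      unfolding split[of g] c1[of g] c2[of g] mid[of g] by simp
  qed
qed

lemma pow_mod5: "2^(2*m+7) mod 5 = (2::nat) \<or> 2^(2*m+7) mod 5 = (3::nat)"
proof (induction m)
  case 0 then show ?case by simp
next
  case (Suc m)
  have "(2::nat)^(2*Suc m+7) = 4 * 2^(2*m+7)" by (simp add: power_add)
  then have "(2::nat)^(2*Suc m+7) mod 5 = (4 * (2^(2*m+7) mod 5)) mod 5" by (simp add: mod_mult_right_eq)
  then show ?case using Suc by auto
qed

lemma Aval_Fe_dvd:
  assumes "h \<ge> 7"
  shows "\<exists>g<16. 5 dvd Aval (Fe Z g) h"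
proof -
  define m where "m = h - 7"
  have m: "h = m + 7" using assms unfolding m_def by simp
  obtain R where R: "\<forall>g. Aval (Fe Z g) h = R + Xg g + 2^(2*m+7) * Yg g" using Aval_Fe[OF m] by blast
  have "\<exists>g<16. (R + Xg g + 2^(2*m+7) * Yg g) mod 5 = 0"
    by (rule gadget[OF pow_mod5])
  then show ?thesis using R by (simp add: dvd_eq_mod_eq_0)
qed



definition Sset :: "nat \<Rightarrow> nat set" where
  "Sset i = {N::nat. 2 ^ (i - 1) \<le> N \<and> N < 2 ^ i \<and>
            (\<exists>A B. antipalindromic A \<and> antipalindromic B \<and> A = N * B)}"

lemma antipal_2: "antipalindromic 2"
  unfolding antipalindromic_def
proof (intro conjI exI[of _ 2])
  show "\<forall>k<2. bdigit 2 k + bdigit 2 (2 - 1 - k) = 1"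
    by (auto simp: bdigit_def less_Suc_eq numeral_2_eq_2)
qed auto

lemma antipal_10: "antipalindromic 10"
  unfolding antipalindromic_def
proof (intro conjI exI[of _ 4])
  show "\<forall>k<4. bdigit 10 k + bdigit 10 (4 - 1 - k) = 1"
  proof (intro allI impI)
    fix k :: nat assume "k < 4"
    then have "k = 0 \<or> k = 1 \<or> k = 2 \<or> k = 3" by auto
    then show "bdigit 10 k + bdigit 10 (4 - 1 - k) = 1"
      by (elim disjE) (simp_all add: bdigit_def)
  qed
qed auto

lemma card_lower:
  assumes "inj_on \<phi> {..<(2::nat)^m}" "\<phi> ` {..<2^m} \<subseteq> Sset i"
  shows "2^m \<le> card (Sset i)"
proof -
  have "finite (Sset i)" by (rule finite_subset[of _ "{..<2^i}"]) (auto simp: Sset_def)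
  then have "card (\<phi> ` {..<2^m}) \<le> card (Sset i)" using assms(2) by (rule card_mono)
  then show ?thesis using card_image[OF assms(1)] by simp
qed

definition Fo :: "nat \<Rightarrow> nat \<Rightarrow> nat" where
  "Fo Z k = (if k = 0 then 0 else bdigit Z (k-1))"

lemma Fo_le: "\<forall>k. Fo Z k \<le> 1" unfolding Fo_def using bdigit_le by simp

lemma odd_case:
  assumes h: "h \<ge> 1"
  shows "2^(h-1) \<le> card (Sset (2*h-1))"
proof (rule card_lower)
  let ?\<phi> = "\<lambda>Z. Aval (Fo Z) h div 2"
  have ev: "Aval (Fo Z) h = ?\<phi> Z * 2" for Z
  proof -
    have "Fo Z 0 = 0" by (simp add: Fo_def)
    moreover have "0 < h" using h by simp
    ultimately have "even (Aval (Fo Z) h)" by (rule Aval_antipal(3)[OF Fo_le])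
    then show ?thesis by simp
  qed
  show "inj_on ?\<phi> {..<2^(h-1)}"
  proof (rule inj_onI)
    fix Z Z' assume Z: "Z \<in> {..<2^(h-1)}" "Z' \<in> {..<2^(h-1)}" and eq: "?\<phi> Z = ?\<phi> Z'"
    have "Aval (Fo Z) h = Aval (Fo Z') h" using ev[of Z] ev[of Z'] eq by simp
    then have fk: "Fo Z k = Fo Z' k" if "k < h" for k using Aval_inj[OF Fo_le Fo_le] that by blast
    have "\<forall>j<h-1. bdigit Z j = bdigit Z' j"
    proof (intro allI impI)
      fix j assume "j < h-1"
      then have "Fo Z (Suc j) = Fo Z' (Suc j)" by (intro fk) simp
      then show "bdigit Z j = bdigit Z' j" by (simp add: Fo_def)
    qed
    then show "Z = Z'" using bits_eq Z by blast
  qed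
  show "?\<phi> ` {..<2^(h-1)} \<subseteq> Sset (2*h-1)"
  proof
    fix N assume "N \<in> ?\<phi> ` {..<2^(h-1)}"
    then obtain Z where N: "N = ?\<phi> Z" by blast
    have f0: "Fo Z 0 = 0" by (simp add: Fo_def)
    have A: "antipalindromic (Aval (Fo Z) h)" "2^(2*h-1) \<le> Aval (Fo Z) h" "Aval (Fo Z) h < 2^(2*h)"
      using Aval_antipal[OF Fo_le f0] Aval_bits(1)[OF Fo_le] h by auto
    obtain X where X: "X = (2::nat)^(2*h-2)" by simp
    have e: "2*h-1 = Suc (2*h-2)" "2*h = Suc (Suc (2*h-2))" using h by auto
    have p: "(2::nat)^(2*h-1) = X*2" "(2::nat)^(2*h) = X*4"
      unfolding X by (subst e, simp)+
    have N2: "2^(2*h-1-1) \<le> N \<and> N < 2^(2*h-1)"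
    proof -
      have "X*2 \<le> N*2" "N*2 < X*4" using A(2,3) ev[of Z] unfolding N[symmetric] p by simp_all
      then have "X \<le> N" "N < X*2" by simp_all
      moreover have "2*h-1-1 = 2*h-2" by simp
      ultimately show ?thesis unfolding X using p(1) X by simp
    qed
    have "\<exists>A B. antipalindromic A \<and> antipalindromic B \<and> A = N * B"
      using A(1) antipal_2 ev[of Z] N by blast
    show "N \<in> Sset (2*h-1)"
      unfolding Sset_def using N2 \<open>\<exists>A B. _\<close> by blast
  qed
qed



lemma dvd10: "even (a::nat) \<Longrightarrow> 5 dvd a \<Longrightarrow> 10 dvd a"
  by presburger

lemma even_case:
  assumes h: "h \<ge> 7"
  shows "2^(h-7) \<le> card (Sset (2*h-4))"
proof -
  define G where "G Z = (SOME g. g < 16 \<and> 5 dvd Aval (Fe Z g) h)" for Z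
  have G: "5 dvd Aval (Fe Z (G Z)) h" for Z
    using someI_ex[OF Aval_Fe_dvd[OF h, of Z]] unfolding G_def by blast
  define A where "A Z = Aval (Fe Z (G Z)) h" for Z
  have f0: "Fe Z g 0 = 0" "Fe Z g 1 = 1" "Fe Z g 2 = 1" for Z g by (simp_all add: Fe_def)
  have hp: "0 < h" "h \<ge> 3" using h by simp_all
  have ten: "A Z = (A Z div 10) * 10" for Z
  proof -
    have "even (A Z)" unfolding A_def by (rule Aval_antipal(3)[OF Fe_le f0(1) hp(1)])
    then have "10 dvd A Z" using G[of Z] unfolding A_def
      by (intro dvd10)
    then show ?thesis by simp
  qed
  let ?\<phi> = "\<lambda>Z. A Z div 10"
  show ?thesis
  proof (rule card_lower)
    show "inj_on ?\<phi> {..<2^(h-7)}"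
    proof (rule inj_onI)
      fix Z Z' assume Z: "Z \<in> {..<2^(h-7)}" "Z' \<in> {..<2^(h-7)}" and eq: "?\<phi> Z = ?\<phi> Z'"
      have "A Z = A Z'" using ten[of Z] ten[of Z'] eq by simp
      then have fk: "Fe Z (G Z) k = Fe Z' (G Z') k" if "k < h" for k
        using Aval_inj[OF Fe_le Fe_le] that unfolding A_def by blast
      have "\<forall>j<h-7. bdigit Z j = bdigit Z' j"
      proof (intro allI impI)
        fix j assume "j < h-7"
        then have "Fe Z (G Z) (j+7) = Fe Z' (G Z') (j+7)" by (intro fk) simp
        then show "bdigit Z j = bdigit Z' j" by (simp add: Fe_def)
      qed
      then show "Z = Z'" using bits_eq Z by blast
    qed
    show "?\<phi> ` {..<2^(h-7)} \<subseteq> Sset (2*h-4)"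
    proof
      fix N assume "N \<in> ?\<phi> ` {..<2^(h-7)}"
      then obtain Z where N: "N = ?\<phi> Z" by blast
      have AZ: "antipalindromic (A Z)" "2^(2*h-1) \<le> A Z" "A Z < 5 * 2^(2*h-3)"
        unfolding A_def using Aval_antipal[OF Fe_le f0(1) hp(1)] Aval_upper[OF Fe_le f0 hp(2)] by auto
      obtain X where X: "X = (2::nat)^(2*h-5)" by simp
      have e: "2*h-1 = (2*h-5) + 4" "2*h-3 = (2*h-5) + 2" "2*h-4 = Suc (2*h-5)" "2*h-4-1 = 2*h-5"
        using h by auto
      have p: "(2::nat)^(2*h-1) = X*16" "(2::nat)^(2*h-3) = X*4" "(2::nat)^(2*h-4) = X*2"
        unfolding X by (subst e, simp add: power_add)+
      have "X*16 \<le> N*10" "N*10 < X*20" using AZ(2,3) ten[of Z] unfolding N[symmetric] p by simp_all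
      then have "X \<le> N" "N < X*2" by simp_all
      then have N2: "2^(2*h-4-1) \<le> N \<and> N < 2^(2*h-4)" unfolding e(4) p(3) X by simp
      have "\<exists>A B. antipalindromic A \<and> antipalindromic B \<and> A = N * B"
        using AZ(1) antipal_10 ten[of Z] N by blast
      then show "N \<in> Sset (2*h-4)"
        unfolding Sset_def using N2 by blast
    qed
  qed
qed

lemma sqrt2_pow: "sqrt 2 ^ (2*n) = (2::real)^n"
proof -
  have "sqrt 2 ^ (2*n) = (sqrt 2 ^ 2)^n" by (rule power_mult)
  then show ?thesis by simp
qed


lemma main_bound:
  assumes i: "i \<ge> 10"
  shows "sqrt 2 ^ i \<le> 32 * real (card (Sset i))"
proof (cases "even i")
  case True
  define k where "k = (i - 10) div 2"
  have ik: "i = 2*k+10" using i True unfolding k_def by presburger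
  have "2^k \<le> card (Sset (2*(k+7)-4))" using even_case[of "k+7"] by simp
  moreover have "2*(k+7)-4 = i" using ik by simp
  ultimately have c: "(2::real)^k \<le> real (card (Sset i))"
    by (metis of_nat_le_iff of_nat_numeral of_nat_power)
  have "sqrt 2 ^ i = sqrt 2 ^ (2*(k+5))" using ik by (simp add: algebra_simps)
  also have "\<dots> = 2^(k+5)" by (rule sqrt2_pow)
  also have "\<dots> = 32 * 2^k" by (simp add: power_add)
  also have "\<dots> \<le> 32 * real (card (Sset i))" using c by simp
  finally show ?thesis .
next
  case False
  define k where "k = (i - 9) div 2"
  have ik: "i = 2*k+9" using i False unfolding k_def by presburger
  have "2^(k+4) \<le> card (Sset (2*(k+5)-1))" using odd_case[of "k+5"] by (simp add: add.commute)
  moreover have "2*(k+5)-1 = i" using ik by simp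
  ultimately have c: "(2::real)^(k+4) \<le> real (card (Sset i))"
    by (metis of_nat_le_iff of_nat_numeral of_nat_power)
  have "sqrt 2 ^ i \<le> sqrt 2 ^ (2*(k+5))" using ik by (intro power_increasing) auto
  also have "\<dots> = 2^(k+5)" by (rule sqrt2_pow)
  also have "\<dots> = 2 * 2^(k+4)" by (simp add: power_add)
  also have "\<dots> \<le> 32 * real (card (Sset i))" using c of_nat_0_le_iff[of "card (Sset i)"] by linarith
  finally show ?thesis .
qed

theorem theorem15:
  shows "(\<lambda>i::nat. real (card {N::nat. 2 ^ (i - 1) \<le> N \<and> N < 2 ^ i \<and>
            (\<exists>A B. antipalindromic A \<and> antipalindromic B \<and> A = N * B)}))
         \<in> \<Omega>(\<lambda>i. sqrt 2 ^ i)"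
proof (rule landau_omega.bigI[of "1/32"])
  show "eventually (\<lambda>i. norm (real (card {N::nat. 2 ^ (i - 1) \<le> N \<and> N < 2 ^ i \<and>
            (\<exists>A B. antipalindromic A \<and> antipalindromic B \<and> A = N * B)})) \<ge> 1/32 * norm (sqrt 2 ^ i)) at_top"
  proof (rule eventually_at_top_linorderI[of 10])
    fix i :: nat assume "i \<ge> 10"
    then show "norm (real (card {N::nat. 2 ^ (i - 1) \<le> N \<and> N < 2 ^ i \<and>
            (\<exists>A B. antipalindromic A \<and> antipalindromic B \<and> A = N * B)})) \<ge> 1/32 * norm (sqrt 2 ^ i)"
      using main_bound[of i] unfolding Sset_def by simp
  qed
qed simp


end
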